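(* Let $X$ be a real Hilbert space, $f:X\to\mathbb{R}\cup\{+\infty\}$ a proper $\Phi_{lsc}$-convex function and $\bar x\in\mathrm{dom}(f)$. If $(a,v)\in\partial^{loc}_{lsc}f(\bar x)$, then there exists $\bar a\ge 0$ such that $(\bar a,\ v-2a\bar x+2\bar a\bar x)\in\partial_{lsc}f(\bar x)$.
   Context: $\Phi_{lsc}$ is the class of functions $\varphi(x)=-a\|x\|^2+\langle v,x\rangle+c$ ($a\ge0$, $v\in X^*$, $c\in\mathbb{R}$); $\mathrm{supp}(f)=\{\varphi\in\Phi_{lsc}:\varphi\le f\}$; $f$ is $\Phi_{lsc}$-convex if $f=\sup\mathrm{supp}(f)$ pointwise; proper means $\mathrm{supp}(f)\ne\emptyset$ and $\mathrm{dom}(f)\ne\emptyset$. For $\varepsilon\ge0$ and $\bar x\in\mathrm{dom}(f)$, a pair $(a,v)\in\mathbb{R}_+\times X^*$ is an $\varepsilon$-$\Phi_{lsc}$-subgradient of $f$ at $\bar x$ if $f(x)-f(\bar x)\ge\langle v,x-\bar x\rangle-a\|x\|^2+a\|\bar x\|^2-\varepsilon$ for all $x\in X$; the set of these is $\partial^\varepsilon_{lsc}f(\bar x)$, and $\partial_{lsc}f(\bar x):=\partial^0_{lsc}f(\bar x)$. A pair $(a,v)\in\mathbb{R}_+\times X^*$ is a local $\Phi_{lsc}$-subgradient of $f$ at $\bar x$ if there is $\delta>0$ such that $f(x)-f(\bar x)\ge\langle v,x-\bar x\rangle-a\|x\|^2+a\|\bar x\|^2$ for all $x$ with $\|x-\bar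 x\|<\delta$; the set of these is $\partial^{loc}_{lsc}f(\bar x)$. *)

theory Defs
  imports "HOL-Analysis.Analysis"
begin

text \<open>The dual X* is identified with X by the Riesz representation (pairing = inner product).
 Functions f : X -> R \<union> {+inf} are modelled as ereal-valued functions never equal to -inf.\<close>

definition Phi_lsc :: "('a::real_inner \<Rightarrow> real) set" where
  "Phi_lsc = {\<phi>. \<exists>a v c. a \<ge> 0 \<and> \<phi> = (\<lambda>x. - a * (norm x)\<^sup>2 + inner v x + c)}"

definition supp :: "('a::real_inner \<Rightarrow> ereal) \<Rightarrow> ('a \<Rightarrow> real) set" where
  "supp f = {\<phi> \<in> Phi_lsc. \<forall>x. ereal (\<phi> x) \<le> f x}"

definition Phi_lsc_convex :: "('a::real_inner \<Rightarrow> ereal) \<Rightarrow> bool" where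
  "Phi_lsc_convex f \<longleftrightarrow> (\<forall>x. f x = (SUP \<phi>\<in>supp f. ereal (\<phi> x)))"

definition edom :: "('a \<Rightarrow> ereal) \<Rightarrow> 'a set" where
  "edom f = {x. f x < \<infinity>}"

definition proper_fun :: "('a::real_inner \<Rightarrow> ereal) \<Rightarrow> bool" where
  "proper_fun f \<longleftrightarrow> supp f \<noteq> {} \<and> edom f \<noteq> {}"

definition eps_subdiff_lsc :: "real \<Rightarrow> ('a::real_inner \<Rightarrow> ereal) \<Rightarrow> 'a \<Rightarrow> (real \<times> 'a) set" where
  "eps_subdiff_lsc \<epsilon> f xb = {(a, v). a \<ge> 0 \<and>
     (\<forall>x. f x - f xb \<ge> ereal (inner v (x - xb) - a * (norm x)\<^sup>2 + a * (norm xb)\<^sup>2 - \<epsilon>))}"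

definition subdiff_lsc :: "('a::real_inner \<Rightarrow> ereal) \<Rightarrow> 'a \<Rightarrow> (real \<times> 'a) set" where
  "subdiff_lsc f xb = eps_subdiff_lsc 0 f xb"

definition loc_subdiff_lsc :: "('a::real_inner \<Rightarrow> ereal) \<Rightarrow> 'a \<Rightarrow> (real \<times> 'a) set" where
  "loc_subdiff_lsc f xb = {(a, v). a \<ge> 0 \<and> (\<exists>\<delta>>0. \<forall>x. norm (x - xb) < \<delta> \<longrightarrow>
     f x - f xb \<ge> ereal (inner v (x - xb) - a * (norm x)\<^sup>2 + a * (norm xb)\<^sup>2))}"

end

theory Submission
  imports Defs
begin

lemma ereal_shift:
  assumes "fx \<noteq> -\<infinity>" "ereal (r + F) \<le> fx"
  shows "ereal r \<le> fx - ereal F"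
  using assms by (cases fx) auto

lemma ereal_shift2:
  assumes "ereal r \<le> fx - ereal F"
  shows "ereal (r + F) \<le> fx"
  using assms by (cases fx) auto

lemma quad_id:
  fixes x xb v :: "'a::real_inner"
  shows "inner v (x - xb) - a * (norm x)\<^sup>2 + a * (norm xb)\<^sup>2
       = inner (v - (2*a) *\<^sub>R xb) (x - xb) - a * (norm (x - xb))\<^sup>2"
  by (simp add: power2_norm_eq_inner inner_diff_left inner_diff_right inner_commute algebra_simps)

lemma far_bound:
  fixes t P K M c ab \<delta> :: real
  assumes "\<delta> > 0" "t \<ge> \<delta>" "M = P/\<delta> + \<bar>K\<bar>/\<delta>^2" "P \<ge> 0" "ab \<ge> c + M"
  shows "(ab - c) * t^2 - P * t + K \<ge> 0"
proof -
  have t0: "t > 0" using assms by linarith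
  have "M * t^2 = P * t * (t/\<delta>) + \<bar>K\<bar> * (t/\<delta>)^2"
  proof -
    have "M * \<delta>^2 = P * \<delta> + \<bar>K\<bar>" using assms by (simp add: field_simps power2_eq_square)
    hence "M * \<delta>^2 * t^2 = (P * \<delta> + \<bar>K\<bar>) * t^2" by simp
    hence X: "M * (\<delta>*(\<delta>*(t*t))) = t*(t*\<bar>K\<bar>) + P*(\<delta>*(t*t))"
      by (simp add: power2_eq_square algebra_simps)
    show ?thesis using assms X by (simp add: field_simps power2_eq_square)
  qed
  moreover have "t/\<delta> \<ge> 1" using assms by simp
  moreover have "P * t * (t/\<delta>) \<ge> P * t" using \<open>t/\<delta> \<ge> 1\<close> assms t0
    by (simp add: mult_left_mono[of 1 "t/\<delta>" "P*t", simplified])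
  moreover have "\<bar>K\<bar> * (t/\<delta>)^2 \<ge> \<bar>K\<bar>"
    using \<open>t/\<delta> \<ge> 1\<close> by (simp add: mult_left_mono[of 1 "(t/\<delta>)^2" "\<bar>K\<bar>", simplified] one_le_power)
  moreover have "(ab - c) * t^2 \<ge> M * t^2" using assms by (simp add: mult_right_mono)
  ultimately show ?thesis by linarith
qed

theorem mainTheorem3:
  fixes f :: "'a::{real_inner, complete_space} \<Rightarrow> ereal"
    and xb v :: 'a and a :: real
  assumes "\<forall>x. f x \<noteq> -\<infinity>"
    and "proper_fun f"
    and "Phi_lsc_convex f"
    and "xb \<in> edom f"
    and "(a, v) \<in> loc_subdiff_lsc f xb"
  shows "\<exists>ab\<ge>0. (ab, v - (2 * a) *\<^sub>R xb + (2 * ab) *\<^sub>R xb) \<in> subdiff_lsc f xb"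
proof -
  obtain F where F: "f xb = ereal F"
    using assms(1,4) unfolding edom_def by (cases "f xb") auto
  from assms(5) obtain \<delta> where a0: "a \<ge> 0" and d0: "\<delta> > 0" and loc:
    "\<And>x. norm (x - xb) < \<delta> \<Longrightarrow>
       f x - f xb \<ge> ereal (inner v (x - xb) - a * (norm x)\<^sup>2 + a * (norm xb)\<^sup>2)"
    unfolding loc_subdiff_lsc_def by auto
  from assms(2) obtain \<phi> where "\<phi> \<in> supp f" unfolding proper_fun_def by auto
  then obtain c u d where c0: "c \<ge> 0" and phi: "\<phi> = (\<lambda>x. - c * (norm x)\<^sup>2 + inner u x + d)"
    and phif: "\<And>x. ereal (\<phi> x) \<le> f x"
    unfolding supp_def Phi_lsc_def by auto
  define w where "w = v - (2*a) *\<^sub>R xb"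
  define p where "p = u - (2*c) *\<^sub>R xb - w"
  define K where "K = \<phi> xb - F"
  define M where "M = norm p/\<delta> + \<bar>K\<bar>/\<delta>^2"
  define ab where "ab = max a (c + M)"
  have ab0: "ab \<ge> 0" using a0 unfolding ab_def by simp
  have key: "ereal (inner w (x - xb) - ab * (norm (x - xb))\<^sup>2 + F) \<le> f x" for x
  proof (cases "norm (x - xb) < \<delta>")
    case True
    have "ereal (inner w (x - xb) - a * (norm (x - xb))\<^sup>2 + F) \<le> f x"
      using ereal_shift2[OF loc[OF True, unfolded F quad_id]] unfolding w_def .
    moreover have "a * (norm (x - xb))\<^sup>2 \<le> ab * (norm (x - xb))\<^sup>2"
      unfolding ab_def by (simp add: mult_right_mono)
    ultimately show ?thesis by (meson ereal_less_eq(3) order_trans diff_left_mono add_right_mono)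
  next
    case False
    define h where "h = x - xb"
    define t where "t = norm h"
    have tge: "t \<ge> \<delta>" using False unfolding t_def h_def by simp
    have fb: "(ab - c) * t^2 - norm p * t + K \<ge> 0"
      by (rule far_bound[OF d0 tge M_def]) (auto simp: ab_def)
    have "inner p h \<ge> - (norm p * t)"
      unfolding t_def using Cauchy_Schwarz_ineq2[of p h] by (simp add: abs_le_iff)
    hence ineq: "(ab - c) * t^2 + inner p h + K \<ge> 0" using fb by linarith
    have exp: "\<phi> x = \<phi> xb - c * t^2 + inner (u - (2*c) *\<^sub>R xb) h"
      unfolding phi t_def h_def
      by (simp add: power2_norm_eq_inner inner_diff_left inner_diff_right inner_commute algebra_simps)
    have "inner p h = inner (u - (2*c) *\<^sub>R xb) h - inner w h"
      unfolding p_def by (simp add: inner_diff_left)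
    hence "inner w (x - xb) - ab * (norm (x - xb))\<^sup>2 + F \<le> \<phi> x"
      using ineq exp unfolding K_def h_def[symmetric] t_def[symmetric] by (simp add: algebra_simps)
    thus ?thesis using phif[of x] by (meson ereal_less_eq(3) order_trans)
  qed
  show ?thesis
  proof (intro exI[of _ ab] conjI ab0)
    show "(ab, v - (2 * a) *\<^sub>R xb + (2 * ab) *\<^sub>R xb) \<in> subdiff_lsc f xb"
      unfolding subdiff_lsc_def eps_subdiff_lsc_def
    proof (clarsimp simp: ab0)
      fix x
      have eq: "inner (v - (2 * a) *\<^sub>R xb + (2 * ab) *\<^sub>R xb) (x - xb) - ab * (norm x)\<^sup>2 + ab * (norm xb)\<^sup>2
          = inner w (x - xb) - ab * (norm (x - xb))\<^sup>2"
        unfolding w_def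
        by (simp add: power2_norm_eq_inner inner_diff_left inner_diff_right inner_add_left inner_commute algebra_simps)
      show "ereal (inner (v - (2 * a) *\<^sub>R xb + (2 * ab) *\<^sub>R xb) (x - xb) - ab * (norm x)\<^sup>2 + ab * (norm xb)\<^sup>2)
          \<le> f x - f xb"
        unfolding eq F using ereal_shift[OF _ key] assms(1) by auto
    qed
  qed
qed

end
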